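(* Let $M$ be a Hausdorff space. Then $\mathcal{Q}_x(\mathcal{T}(M))\neq\emptyset$ for every $x\in M$, and $\bigcup_{x\in M}\mathcal{Q}_x(\mathcal{T}(M))$ is dense in $\mathcal{Q}(\mathcal{T}(M))$.
   Context: $\mathcal{T}(M)$ is the lattice of open subsets of $M$. A quasipoint of $\mathcal{T}(M)$ is a maximal dual ideal, i.e. a maximal nonempty family $\mathfrak{B}$ of open sets with $\emptyset\notin\mathfrak{B}$, upward closed and closed under finite intersections. $\mathcal{Q}(\mathcal{T}(M))$ is the set of quasipoints with the topology having base $\mathcal{Q}_U(\mathcal{T}(M))=\{\mathfrak{B}\mid U\in\mathfrak{B}\}$, $U\in\mathcal{T}(M)$. A quasipoint $\mathfrak{B}$ is a quasipoint over $x\in M$ if $x\in\bigcap_{U\in\mathfrak{B}}\overline{U}$; $\mathcal{Q}_x(\mathcal{T}(M))$ denotes the set of quasipoints over $x$. *)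

theory Defs
  imports "HOL-Analysis.Analysis"
begin

definition opens :: "'a topology \<Rightarrow> 'a set set" where
  "opens X = {U. openin X U}"

definition proper_dual_ideal :: "'a topology \<Rightarrow> 'a set set \<Rightarrow> bool" where
  "proper_dual_ideal X B \<longleftrightarrow>
     B \<subseteq> opens X \<and> B \<noteq> {} \<and> {} \<notin> B \<and>
     (\<forall>U V. U \<in> B \<and> V \<in> opens X \<and> U \<subseteq> V \<longrightarrow> V \<in> B) \<and>
     (\<forall>U V. U \<in> B \<and> V \<in> B \<longrightarrow> U \<inter> V \<in> B)"

definition quasipoint :: "'a topology \<Rightarrow> 'a set set \<Rightarrow> bool" where
  "quasipoint X B \<longleftrightarrow> proper_dual_ideal X B \<and>
     (\<forall>C. proper_dual_ideal X C \<and> B \<subseteq> C \<longrightarrow> C = B)"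

definition quasipoints :: "'a topology \<Rightarrow> 'a set set set" where
  "quasipoints X = {B. quasipoint X B}"

definition Q_basic :: "'a topology \<Rightarrow> 'a set \<Rightarrow> 'a set set set" where
  "Q_basic X U = {B \<in> quasipoints X. U \<in> B}"

definition Q_topology :: "'a topology \<Rightarrow> 'a set set topology" where
  "Q_topology X = topology_generated_by {Q_basic X U | U. openin X U}"

definition quasipoints_over :: "'a topology \<Rightarrow> 'a \<Rightarrow> 'a set set set" where
  "quasipoints_over X x = {B \<in> quasipoints X. \<forall>U\<in>B. x \<in> X closure_of U}"

end

theory Submission
  imports Defs
begin

lemma pdi_up: "proper_dual_ideal X B \<Longrightarrow> U \<in> B \<Longrightarrow> openin X V \<Longrightarrow> U \<subseteq> V \<Longrightarrow> V \<in> B"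
  unfolding proper_dual_ideal_def opens_def by blast
lemma pdi_int: "proper_dual_ideal X B \<Longrightarrow> U \<in> B \<Longrightarrow> V \<in> B \<Longrightarrow> U \<inter> V \<in> B"
  unfolding proper_dual_ideal_def by blast
lemma pdi_empty: "proper_dual_ideal X B \<Longrightarrow> {} \<notin> B"
  unfolding proper_dual_ideal_def by blast
lemma pdi_open: "proper_dual_ideal X B \<Longrightarrow> U \<in> B \<Longrightarrow> openin X U"
  unfolding proper_dual_ideal_def opens_def by blast
lemma pdi_ne: "proper_dual_ideal X B \<Longrightarrow> \<exists>U. U \<in> B"
  unfolding proper_dual_ideal_def by blast
lemma qp_pdi: "quasipoint X B \<Longrightarrow> proper_dual_ideal X B"
  unfolding quasipoint_def by blast

lemma pdi_chain_Union:
  assumes "C \<noteq> {}" "subset.chain {D. proper_dual_ideal X D \<and> F \<subseteq> D} C"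
  shows "\<Union>C \<in> {D. proper_dual_ideal X D \<and> F \<subseteq> D}"
proof -
  have mem: "\<And>D. D \<in> C \<Longrightarrow> proper_dual_ideal X D \<and> F \<subseteq> D"
    using assms(2) unfolding subset.chain_def by blast
  have ch: "\<And>D E. D \<in> C \<Longrightarrow> E \<in> C \<Longrightarrow> D \<subseteq> E \<or> E \<subseteq> D"
    using assms(2) unfolding subset.chain_def by blast
  obtain D0 where D0: "D0 \<in> C" using assms(1) by blast
  have "proper_dual_ideal X (\<Union>C)"
    unfolding proper_dual_ideal_def
  proof (intro conjI allI impI)
    show "\<Union>C \<subseteq> opens X" using mem unfolding proper_dual_ideal_def by blast
    show "\<Union>C \<noteq> {}" using mem D0 unfolding proper_dual_ideal_def by blast
    show "{} \<notin> \<Union>C" using mem unfolding proper_dual_ideal_def by blast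
    fix U V
    show "V \<in> \<Union>C" if "U \<in> \<Union>C \<and> V \<in> opens X \<and> U \<subseteq> V"
      using that mem unfolding proper_dual_ideal_def by blast
    show "U \<inter> V \<in> \<Union>C" if h: "U \<in> \<Union>C \<and> V \<in> \<Union>C"
    proof -
      obtain D E where "D \<in> C" "E \<in> C" "U \<in> D" "V \<in> E" using h by blast
      show ?thesis
      proof (cases "D \<subseteq> E")
        case True
        then have "U \<inter> V \<in> E" using pdi_int[of X E U V] mem[of E] \<open>E \<in> C\<close> \<open>U \<in> D\<close> \<open>V \<in> E\<close> by blast
        then show ?thesis using \<open>E \<in> C\<close> by blast
      next
        case False
        then have "E \<subseteq> D" using ch[of D E] \<open>D \<in> C\<close> \<open>E \<in> C\<close> by blast
        then have "U \<inter> V \<in> D" using pdi_int[of X D U V] mem[of D] \<open>D \<in> C\<close> \<open>U \<in> D\<close> \<open>V \<in> E\<close> by blast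
        then show ?thesis using \<open>D \<in> C\<close> by blast
      qed
    qed
  qed
  moreover have "F \<subseteq> \<Union>C" using mem D0 by blast
  ultimately show ?thesis by blast
qed

lemma extend_quasipoint:
  assumes "proper_dual_ideal X F"
  shows "\<exists>B. quasipoint X B \<and> F \<subseteq> B"
proof -
  have "\<exists>M\<in>{D. proper_dual_ideal X D \<and> F \<subseteq> D}. \<forall>Y\<in>{D. proper_dual_ideal X D \<and> F \<subseteq> D}. M \<subseteq> Y \<longrightarrow> Y = M"
  proof (rule subset_Zorn_nonempty)
    show "{D. proper_dual_ideal X D \<and> F \<subseteq> D} \<noteq> {}" using assms by blast
  next
    fix C assume "C \<noteq> {}" "subset.chain {D. proper_dual_ideal X D \<and> F \<subseteq> D} C"
    then show "\<Union>C \<in> {D. proper_dual_ideal X D \<and> F \<subseteq> D}" by (rule pdi_chain_Union)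
  qed
  then obtain B where B: "proper_dual_ideal X B" "F \<subseteq> B"
    and mx: "\<And>Y. proper_dual_ideal X Y \<Longrightarrow> F \<subseteq> Y \<Longrightarrow> B \<subseteq> Y \<Longrightarrow> Y = B" by auto
  have "quasipoint X B" unfolding quasipoint_def
  proof (intro conjI allI impI)
    fix C assume "proper_dual_ideal X C \<and> B \<subseteq> C"
    then show "C = B" using mx[of C] B(2) by blast
  qed (rule B(1))
  then show ?thesis using B by blast
qed

lemma over_exists:
  assumes "openin X U" "x \<in> U"
  shows "\<exists>B. B \<in> quasipoints_over X x \<and> U \<in> B"
proof -
  define F where "F = {V. openin X V \<and> x \<in> V}"
  have "proper_dual_ideal X F"
    unfolding proper_dual_ideal_def F_def opens_def
  proof (intro conjI allI impI)
    show "{V. openin X V \<and> x \<in> V} \<noteq> {}" using assms by blast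
  qed auto
  then obtain B where B: "quasipoint X B" "F \<subseteq> B" using extend_quasipoint by blast
  have "x \<in> X closure_of V" if "V \<in> B" for V
  proof -
    have xt: "x \<in> topspace X" using assms openin_subset by blast
    have "\<exists>y. y \<in> V \<and> y \<in> T" if "x \<in> T" "openin X T" for T
    proof (rule ccontr)
      assume "\<not> ?thesis"
      then have "T \<inter> V = {}" by blast
      moreover have "T \<in> B" using B(2) that unfolding F_def by blast
      ultimately have "{} \<in> B" using pdi_int[OF qp_pdi[OF B(1)] \<open>T \<in> B\<close> \<open>V \<in> B\<close>] by simp
      then show False using pdi_empty[OF qp_pdi[OF B(1)]] by blast
    qed
    then show ?thesis using xt in_closure_of by metis
  qed
  moreover have "U \<in> B" using B(2) assms unfolding F_def by blast
  ultimately show ?thesis using B(1) unfolding quasipoints_over_def quasipoints_def by auto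
qed

lemma qp_topspace:
  assumes "quasipoint X B" shows "topspace X \<in> B"
proof -
  have p: "proper_dual_ideal X B" using assms by (rule qp_pdi)
  then obtain U where "U \<in> B" using pdi_ne by blast
  moreover have "U \<subseteq> topspace X"
    using pdi_open[OF p \<open>U \<in> B\<close>] openin_subset by blast
  ultimately show ?thesis using pdi_up[OF p, of U "topspace X"] by simp
qed

lemma Q_mono: "openin X V \<Longrightarrow> U \<subseteq> V \<Longrightarrow> Q_basic X U \<subseteq> Q_basic X V"
proof
  fix B assume "openin X V" "U \<subseteq> V" "B \<in> Q_basic X U"
  then have "quasipoint X B" "U \<in> B" unfolding Q_basic_def quasipoints_def by auto
  then have "V \<in> B" using pdi_up[OF qp_pdi] \<open>openin X V\<close> \<open>U \<subseteq> V\<close> by blast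
  then show "B \<in> Q_basic X V" using \<open>B \<in> Q_basic X U\<close> unfolding Q_basic_def by auto
qed

lemma Q_int: "B \<in> Q_basic X U \<Longrightarrow> B \<in> Q_basic X V \<Longrightarrow> B \<in> Q_basic X (U \<inter> V)"
proof -
  assume a: "B \<in> Q_basic X U" "B \<in> Q_basic X V"
  then have "quasipoint X B" "U \<in> B" "V \<in> B" unfolding Q_basic_def quasipoints_def by auto
  then have "U \<inter> V \<in> B" using pdi_int[OF qp_pdi] by blast
  then show ?thesis using a unfolding Q_basic_def by auto
qed

lemma gen_basic:
  assumes "generate_topology_on {Q_basic X U | U. openin X U} W" "B \<in> W"
  shows "\<exists>U. openin X U \<and> B \<in> Q_basic X U \<and> Q_basic X U \<subseteq> W"
  using assms
proof (induction arbitrary: B rule: generate_topology_on.induct)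
  case Empty
  then show ?case by simp
next
  case (Int a b)
  have "B \<in> a" "B \<in> b" using Int.prems by auto
  obtain U where U: "openin X U" "B \<in> Q_basic X U" "Q_basic X U \<subseteq> a"
    using Int.IH(1)[OF \<open>B \<in> a\<close>] by blast
  obtain V where V: "openin X V" "B \<in> Q_basic X V" "Q_basic X V \<subseteq> b"
    using Int.IH(2)[OF \<open>B \<in> b\<close>] by blast
  have s1: "Q_basic X (U \<inter> V) \<subseteq> Q_basic X U" by (rule Q_mono[OF U(1)]) blast
  have s2: "Q_basic X (U \<inter> V) \<subseteq> Q_basic X V" by (rule Q_mono[OF V(1)]) blast
  have m: "B \<in> Q_basic X (U \<inter> V)"
    using U(2) V(2) by (rule Q_int)
  have o: "openin X (U \<inter> V)" using U(1) V(1) by (rule openin_Int)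
  have "Q_basic X (U \<inter> V) \<subseteq> a \<inter> b" using s1 s2 U(3) V(3) by blast
  then show ?case using o m by blast
next
  case (UN K)
  then obtain k where "k \<in> K" "B \<in> k" by auto
  then obtain U where "openin X U" "B \<in> Q_basic X U" "Q_basic X U \<subseteq> k" using UN.IH[of k B] by blast
  then show ?case using \<open>k \<in> K\<close> by auto
next
  case (Basis s)
  then obtain U where "openin X U" "s = Q_basic X U" by auto
  then show ?case using Basis by auto
qed

theorem proposition2p41:
  fixes M :: "'a topology"
  assumes "Hausdorff_space M"
  shows "(\<forall>x\<in>topspace M. quasipoints_over M x \<noteq> {})
    \<and> (Q_topology M) closure_of (\<Union>x\<in>topspace M. quasipoints_over M x) = quasipoints M"
proof
  show "\<forall>x\<in>topspace M. quasipoints_over M x \<noteq> {}"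
  proof
    fix x assume "x \<in> topspace M"
    then obtain B where "B \<in> quasipoints_over M x" using over_exists[of M "topspace M" x] by blast
    then show "quasipoints_over M x \<noteq> {}" by blast
  qed
  define S where "S = {Q_basic M U | U. openin M U}"
  have ts: "topspace (Q_topology M) = quasipoints M"
  proof -
    have "\<Union>S = quasipoints M"
    proof
      show "\<Union>S \<subseteq> quasipoints M" unfolding S_def Q_basic_def by blast
      show "quasipoints M \<subseteq> \<Union>S"
      proof
        fix B assume B: "B \<in> quasipoints M"
        then have "B \<in> Q_basic M (topspace M)"
          using qp_topspace[of M B] unfolding Q_basic_def quasipoints_def by simp
        moreover have "Q_basic M (topspace M) \<in> S" unfolding S_def by blast
        ultimately show "B \<in> \<Union>S" by blast
      qed
    qed
    then show ?thesis unfolding Q_topology_def S_def by simp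
  qed
  define D where "D = (\<Union>x\<in>topspace M. quasipoints_over M x)"
  have "quasipoints M \<subseteq> (Q_topology M) closure_of D"
  proof
    fix B assume B: "B \<in> quasipoints M"
    have "\<exists>y. y \<in> D \<and> y \<in> T"
      if T: "B \<in> T" "openin (Q_topology M) T" for T
    proof -
      have "generate_topology_on {Q_basic M U | U. openin M U} T"
        using T(2) unfolding Q_topology_def openin_topology_generated_by_iff .
      from gen_basic[OF this T(1)] obtain U where U: "openin M U" "B \<in> Q_basic M U" "Q_basic M U \<subseteq> T"
        by blast
      have "U \<in> B" "quasipoint M B" using U(2) unfolding Q_basic_def quasipoints_def by auto
      then have "U \<noteq> {}" using pdi_empty[OF qp_pdi, of M B] by auto
      then obtain x where x: "x \<in> U" by blast
      obtain C where C: "C \<in> quasipoints_over M x" "U \<in> C" using over_exists[OF U(1) x] by blast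
      have "x \<in> topspace M" using x openin_subset[OF U(1)] by blast
      then have "C \<in> D" unfolding D_def using C(1) by blast
      moreover have "C \<in> Q_basic M U" using C unfolding Q_basic_def quasipoints_over_def by simp
      ultimately show ?thesis using U(3) by blast
    qed
    then show "B \<in> (Q_topology M) closure_of D"
      unfolding in_closure_of using B ts by simp
  qed
  moreover have "(Q_topology M) closure_of D \<subseteq> quasipoints M"
    using closure_of_subset_topspace[of "Q_topology M" D] ts by simp
  ultimately show "(Q_topology M) closure_of (\<Union>x\<in>topspace M. quasipoints_over M x) = quasipoints M"
    unfolding D_def by blast
qed

end
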